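(* For every nonzero integer $n$, \[\left\lfloor\frac{1}{e^{\sqrt2/n}-1}\right\rfloor=\left\lfloor\frac{n}{\sqrt2}-\frac12\right\rfloor.\]
   Context: $\lfloor x\rfloor$ denotes the floor of $x$. *)

theory Defs
  imports Complex_Main
begin

end

theory Submission
  imports Defs
begin

lemma exp_lo5: fixes y :: real assumes "0 \<le> y"
  shows "1 + y + y^2/2 + y^3/6 + y^4/24 \<le> exp y"
proof -
  obtain t where "exp y = (\<Sum>m<5. (y ^ m) / fact m) + (exp t / fact 5) * y ^ 5"
    using Maclaurin_exp_le by blast
  moreover have "(exp t / fact 5) * y ^ 5 \<ge> 0" using assms by simp
  moreover have "(\<Sum>m<5. (y ^ m) / fact m) = 1 + y + y^2/2 + y^3/6 + y^4/24"
    by (simp add: numeral_eq_Suc fact_numeral eval_nat_numeral)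
  ultimately show ?thesis by linarith
qed

lemma exp_lo4: fixes y :: real assumes "0 \<le> y"
  shows "1 - y + y^2/2 - y^3/6 \<le> exp (-y)"
proof -
  obtain t where "exp (-y) = (\<Sum>m<4. ((-y) ^ m) / fact m) + (exp t / fact 4) * (-y) ^ 4"
    using Maclaurin_exp_le by blast
  moreover have "(exp t / fact 4) * (-y) ^ 4 \<ge> 0" using assms by simp
  moreover have "(\<Sum>m<4. ((-y) ^ m) / fact m) = 1 - y + y^2/2 - y^3/6"
    by (simp add: numeral_eq_Suc fact_numeral eval_nat_numeral)
  ultimately show ?thesis by linarith
qed

lemma f_upper: fixes y :: real assumes "0 < y" "y^2 \<le> 2"
  shows "1 / (exp y - 1) \<le> 1/y - 1/2 + y/10"
proof -
  define P where "P = 1 + y/2 + y^2/6 + y^3/24"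
  have P: "P > 0" using assms unfolding P_def by (simp add: add_pos_nonneg)
  have E: "exp y - 1 \<ge> y * P" using exp_lo5[of y] assms unfolding P_def
    by (simp add: algebra_simps power2_eq_square power3_eq_cube power4_eq_xxxx)
  have yP: "y * P > 0" using P assms by simp
  have "1 / (exp y - 1) \<le> 1 / (y*P)"
    using E yP by (simp add: frac_le)
  also have "\<dots> \<le> 1/y - 1/2 + y/10"
  proof -
    have key: "P * (1 - y/2 + y^2/10) - 1 = y^2/240 * (4 + 2*y - y^2 + y^3)"
      unfolding P_def by (simp add: field_simps power2_eq_square power3_eq_cube power4_eq_xxxx)
    have "4 + 2*y - y^2 + y^3 \<ge> 0" using assms by (simp add: add_nonneg_nonneg)
    hence "P * (1 - y/2 + y^2/10) \<ge> 1" using key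
      by (metis diff_ge_0_iff_ge mult_nonneg_nonneg zero_le_power2 divide_nonneg_pos zero_less_numeral)
    hence "1 \<le> (y*P) * (1/y - 1/2 + y/10)" using assms
      by (simp add: algebra_simps power2_eq_square)
    thus ?thesis using yP by (simp add: divide_simps mult.commute)
  qed
  finally show ?thesis .
qed

lemma f_lower: fixes y :: real assumes "0 < y" "y^2 \<le> 2"
  shows "1/y - 1/2 - y/10 \<le> 1 / (exp y - 1)"
proof -
  define L where "L = 1 - y + y^2/2 - y^3/6"
  define S where "S = 1 - y/2 + y^2/6"
  have S: "S > 0" proof -
    have "S = (y - 3/2)^2/6 + 5/8" by (simp add: S_def power2_eq_square field_simps)
    thus ?thesis by (metis add_nonneg_pos divide_nonneg_pos zero_le_power2 zero_less_numeral divide_pos_pos)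
  qed
  have L1: "1 - L = y * S" unfolding L_def S_def by (simp add: algebra_simps power2_eq_square power3_eq_cube)
  have u: "exp (-y) \<ge> L" using exp_lo4[of y] assms unfolding L_def by simp
  have u1: "exp (-y) < 1" using assms by simp
  have eq: "1 / (exp y - 1) = exp (-y) / (1 - exp (-y))"
    using assms by (simp add: exp_minus field_simps)
  have mono: "L / (1 - L) \<le> exp (-y) / (1 - exp (-y))"
  proof -
    have "L * (1 - exp (-y)) \<le> exp (-y) * (1 - L)" using u by (simp add: algebra_simps)
    moreover have "1 - L > 0" using L1 S assms by simp
    moreover have "1 - exp (-y) > 0" using u1 by simp
    ultimately show ?thesis by (simp add: divide_simps)
  qed
  have key: "L - (1 - y/2 - y^2/10) * S = y^2/60 * (11 - 8*y + y^2)"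
    unfolding L_def S_def by (simp add: field_simps power2_eq_square power3_eq_cube power4_eq_xxxx)
  have "y < 3/2"
  proof (rule ccontr)
    assume "\<not> y < 3/2"
    hence "(3/2::real)^2 \<le> y^2" by (intro power_mono) auto
    moreover have "(3/2::real)^2 = 9/4" by (simp add: power2_eq_square)
    ultimately show False using assms by linarith
  qed
  hence "(5/2::real)^2 \<le> (4 - y)^2" by (intro power_mono) auto
  moreover have "11 - 8*y + y^2 = (4-y)^2 - 5" by (simp add: power2_eq_square algebra_simps)
  moreover have "(5/2::real)^2 = 25/4" by (simp add: power2_eq_square)
  ultimately have "11 - 8*y + y^2 \<ge> 0" by linarith
  hence "L \<ge> (1 - y/2 - y^2/10) * S" using key
    by (metis diff_ge_0_iff_ge mult_nonneg_nonneg zero_le_power2 divide_nonneg_pos zero_less_numeral)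
  hence "(1/y - 1/2 - y/10) * (y * S) \<le> L" using assms
    by (simp add: algebra_simps power2_eq_square)
  hence "1/y - 1/2 - y/10 \<le> L / (1 - L)" using L1 S assms by (simp add: divide_simps)
  thus ?thesis using mono eq by linarith
qed

lemma odd_nz: fixes k p :: int assumes "odd k" shows "\<bar>k^2 - 2*p^2\<bar> \<ge> 1"
proof -
  have "odd (k^2 - 2*p^2)" using assms by simp
  hence "k^2 - 2*p^2 \<noteq> 0" by (metis even_zero)
  thus ?thesis by linarith
qed

lemma no_int: fixes p m :: int assumes "p > 0"
  shows "\<bar>real_of_int m - (real_of_int p / sqrt 2 - 1/2)\<bar> > sqrt 2 / real_of_int p / 10"
proof (rule ccontr)
  define k where "k = 2*m+1"
  define d where "d = real_of_int k - real_of_int p * sqrt 2"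
  have s2: "sqrt 2 * sqrt 2 = (2::real)" by simp
  have sp: "sqrt 2 > (0::real)" by simp
  have pr: "real_of_int p \<ge> 1" using assms by simp
  have "real_of_int p / sqrt 2 = real_of_int p * sqrt 2 / 2"
    using s2 sp by (simp add: field_simps)
  hence md: "real_of_int m - (real_of_int p / sqrt 2 - 1/2) = d/2"
    unfolding d_def k_def by simp
  assume "\<not> ?thesis"
  hence "\<bar>d\<bar> \<le> sqrt 2 / real_of_int p / 5" using md by simp
  hence dle: "\<bar>d\<bar> * real_of_int p \<le> sqrt 2 / 5" using pr by (simp add: field_simps)
  have eq: "real_of_int (k^2 - 2*p^2) = d * (d + 2 * real_of_int p * sqrt 2)"
    unfolding d_def by (simp add: algebra_simps power2_eq_square s2)
  have "odd k" unfolding k_def by simp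
  hence "\<bar>real_of_int (k^2 - 2*p^2)\<bar> \<ge> 1" using odd_nz[of k p] by linarith
  hence o1: "1 \<le> \<bar>d\<bar> * \<bar>d + 2 * real_of_int p * sqrt 2\<bar>"
    unfolding eq abs_mult .
  have "\<bar>d + 2 * real_of_int p * sqrt 2\<bar> \<le> \<bar>d\<bar> + 2 * real_of_int p * sqrt 2"
    using abs_triangle_ineq[of d "2 * real_of_int p * sqrt 2"] sp pr by simp
  hence "\<bar>d\<bar> * \<bar>d + 2 * real_of_int p * sqrt 2\<bar> \<le> \<bar>d\<bar> * (\<bar>d\<bar> + 2 * real_of_int p * sqrt 2)"
    by (intro mult_left_mono) auto
  hence one: "1 \<le> \<bar>d\<bar> * \<bar>d\<bar> + 2 * (\<bar>d\<bar> * real_of_int p) * sqrt 2"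
    using o1 by (simp add: algebra_simps)
  have a1: "2 * (\<bar>d\<bar> * real_of_int p) * sqrt 2 \<le> 4/5"
    using mult_right_mono[OF dle, of "2 * sqrt 2"] s2 sp by (simp add: algebra_simps)
  have "\<bar>d\<bar> \<le> \<bar>d\<bar> * real_of_int p" using pr by (simp add: mult_le_cancel_left1)
  hence dl: "\<bar>d\<bar> \<le> sqrt 2 / 5" using dle by linarith
  have "\<bar>d\<bar> * \<bar>d\<bar> \<le> (sqrt 2 / 5) * (sqrt 2 / 5)" using dl by (intro mult_mono) auto
  also have "\<dots> = 2/25" using s2 by simp
  finally show False using one a1 by linarith
qed

lemma floor_eq_noint: fixes a b u v :: real
  assumes "\<forall>m::int. \<not> (a \<le> real_of_int m \<and> real_of_int m \<le> b)"
    "a \<le> u" "u \<le> b" "a \<le> v" "v \<le> b"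
  shows "\<lfloor>u\<rfloor> = \<lfloor>v\<rfloor>"
proof (rule ccontr)
  assume ne: "\<lfloor>u\<rfloor> \<noteq> \<lfloor>v\<rfloor>"
  show False
  proof (cases "\<lfloor>u\<rfloor> < \<lfloor>v\<rfloor>")
    case True
    hence "real_of_int \<lfloor>v\<rfloor> \<ge> real_of_int \<lfloor>u\<rfloor> + 1" by linarith
    moreover have "u < real_of_int \<lfloor>u\<rfloor> + 1" by linarith
    moreover have "real_of_int \<lfloor>v\<rfloor> \<le> v" by simp
    ultimately show False using assms by (metis order.trans less_le_not_le order.strict_trans2 linorder_not_le)
  next
    case False
    hence "real_of_int \<lfloor>u\<rfloor> \<ge> real_of_int \<lfloor>v\<rfloor> + 1" using ne by linarith
    moreover have "v < real_of_int \<lfloor>v\<rfloor> + 1" by linarith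
    moreover have "real_of_int \<lfloor>u\<rfloor> \<le> u" by simp
    ultimately show False using assms by (metis order.trans less_le_not_le order.strict_trans2 linorder_not_le)
  qed
qed

theorem mainTheorem14:
  fixes n :: int
  assumes "n \<noteq> 0"
  shows "\<lfloor>1 / (exp (sqrt 2 / real_of_int n) - 1)\<rfloor> = \<lfloor>real_of_int n / sqrt 2 - 1 / 2\<rfloor>"
proof -
  define p where "p = \<bar>n\<bar>"
  have p0: "p > 0" using assms unfolding p_def by simp
  have pr: "real_of_int p \<ge> 1" using p0 by simp
  define y where "y = sqrt 2 / real_of_int p"
  have y0: "y > 0" using p0 unfolding y_def by simp
  have "y^2 = 2 / (real_of_int p)^2" unfolding y_def by (simp add: power_divide)
  also have "\<dots> \<le> 2" using pr by (simp add: field_simps one_le_power)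
  finally have y2: "y^2 \<le> 2" .
  define A where "A = real_of_int p / sqrt 2 - 1/2"
  define \<delta> where "\<delta> = sqrt 2 / real_of_int p / 10"
  have yd: "y/10 = \<delta>" unfolding y_def \<delta>_def by simp
  have iy: "1/y = real_of_int p / sqrt 2" unfolding y_def by simp
  have lo: "A - \<delta> \<le> 1 / (exp y - 1)" using f_lower[OF y0 y2] yd iy unfolding A_def by simp
  have up: "1 / (exp y - 1) \<le> A + \<delta>" using f_upper[OF y0 y2] yd iy unfolding A_def by simp
  have ni: "\<And>m. \<bar>real_of_int m - A\<bar> > \<delta>" using no_int[OF p0] unfolding A_def \<delta>_def by blast
  have d0: "\<delta> > 0" using p0 unfolding \<delta>_def by simp
  show ?thesis
  proof (cases "n > 0")
    case True
    hence "p = n" unfolding p_def by simp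
    hence e1: "sqrt 2 / real_of_int n = y" and e2: "real_of_int n / sqrt 2 - 1/2 = A"
      unfolding y_def A_def by simp_all
    have nm: "\<forall>m::int. \<not> (A - \<delta> \<le> real_of_int m \<and> real_of_int m \<le> A + \<delta>)"
    proof (intro allI notI)
      fix m :: int assume "A - \<delta> \<le> real_of_int m \<and> real_of_int m \<le> A + \<delta>"
      hence "\<bar>real_of_int m - A\<bar> \<le> \<delta>" by linarith
      thus False using ni[of m] by linarith
    qed
    show ?thesis unfolding e1 e2 by (rule floor_eq_noint[OF nm lo up]) (use d0 in auto)
  next
    case False
    hence "p = -n" unfolding p_def using assms by simp
    hence e1: "sqrt 2 / real_of_int n = -y" and e2: "real_of_int n / sqrt 2 - 1/2 = -1 - A"
      unfolding y_def A_def by simp_all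
    have ey: "exp y \<noteq> 1" using y0 by simp
    have fneg: "1 / (exp (-y) - 1) = -1 - 1 / (exp y - 1)"
    proof -
      have "exp y - 1 \<noteq> 0" using ey by simp
      moreover have "1 - exp y \<noteq> 0" using ey by simp
      ultimately show ?thesis by (simp add: exp_minus field_simps)
    qed
    have nm: "\<forall>m::int. \<not> (-1 - A - \<delta> \<le> real_of_int m \<and> real_of_int m \<le> -1 - A + \<delta>)"
    proof (intro allI notI)
      fix m :: int assume "-1 - A - \<delta> \<le> real_of_int m \<and> real_of_int m \<le> -1 - A + \<delta>"
      hence "\<bar>real_of_int (-1 - m) - A\<bar> \<le> \<delta>" by simp linarith
      thus False using ni[of "-1 - m"] by linarith
    qed
    have lo': "-1 - A - \<delta> \<le> 1 / (exp (-y) - 1)" using up fneg by linarith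
    have up': "1 / (exp (-y) - 1) \<le> -1 - A + \<delta>" using lo fneg by linarith
    show ?thesis unfolding e1 e2 by (rule floor_eq_noint[OF nm lo' up']) (use d0 in auto)
  qed
qed

end
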